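(* Let $\Omega>0$ be fixed and for each $\lambda>1/\pi$ let $w^\lambda$ be a maximizer of $\mathcal{E}$ over $K_\lambda(D)$. With $\varepsilon=(\pi\lambda)^{-1/2}$, as $\lambda\to+\infty$, $$\mathcal{E}(w^\lambda)=-\frac{1}{4\pi}\ln\varepsilon+O(1).$$
   Context: $D$ is the open unit disk in $\mathbb{R}^2$; $G(x,y)=-\frac{1}{2\pi}\ln|x-y|-h(x,y)$ is the Green's function of $-\Delta$ in $D$ with zero Dirichlet boundary condition, $h(x,y)=-\frac{1}{2\pi}\ln|y|-\frac{1}{2\pi}\ln|x-\frac{y}{|y|^2}|$. $K_\lambda(D)=\{w\in L^\infty(D):0\le w\le\lambda\text{ a.e.},\ \int_D w=1\}$, $\mathcal{E}(w)=\frac12\int_D\int_D G(x,y)w(x)w(y)dxdy+\frac{\Omega}{2}\int_D|x|^2w(x)dx$; a maximizer is $w^\lambda\in K_\lambda(D)$ with $\mathcal{E}(w^\lambda)=\sup_{K_\lambda(D)}\mathcal{E}$. $O(1)$ denotes a quantity bounded independently of $\lambda$. *)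

theory Defs
  imports "HOL-Analysis.Analysis"
begin

definition unit_disk :: "(real^2) set" where
  "unit_disk = ball 0 1"

definition green_h :: "real^2 \<Rightarrow> real^2 \<Rightarrow> real" where
  "green_h x y = - (1/(2*pi)) * ln (norm y) - (1/(2*pi)) * ln (norm (x - y /\<^sub>R (norm y)^2))"

text \<open>Green's function of \<open>-\<Delta>\<close> in the unit disk with zero Dirichlet data.\<close>
definition green :: "real^2 \<Rightarrow> real^2 \<Rightarrow> real" where
  "green x y = - (1/(2*pi)) * ln (norm (x - y)) - green_h x y"

definition K_lambda :: "real \<Rightarrow> (real^2 \<Rightarrow> real) set" where
  "K_lambda lam = {w. set_borel_measurable lborel unit_disk w
                     \<and> (AE x in lborel. x \<in> unit_disk \<longrightarrow> 0 \<le> w x \<and> w x \<le> lam)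
                     \<and> set_integrable lborel unit_disk w
                     \<and> (LINT x:unit_disk|lborel. w x) = 1}"

definition energy :: "real \<Rightarrow> (real^2 \<Rightarrow> real) \<Rightarrow> real" where
  "energy \<Omega> w =
     (1/2) * (LINT x:unit_disk|lborel. (LINT y:unit_disk|lborel. green x y * w x * w y))
     + (\<Omega>/2) * (LINT x:unit_disk|lborel. (norm x)^2 * w x)"

end

theory Submission
  imports Defs "HOL-Analysis.Analysis"
begin


lemma emeasure_cball2: fixes c :: "real^2" assumes "r \<ge> 0"
  shows "emeasure lborel (cball c r) = ennreal (pi * r^2)"
proof -
  have "unit_ball_vol (real DIM(real^2)) = pi"
    using unit_ball_vol_numeral(1)[of Num.One] by simp
  then show ?thesis using emeasure_cball[OF assms, of c] by simp
qed

lemma emeasure_ball2: fixes c :: "real^2" assumes "r \<ge> 0"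
  shows "emeasure lborel (ball c r) = ennreal (pi * r^2)"
proof -
  have "unit_ball_vol (real DIM(real^2)) = pi"
    using unit_ball_vol_numeral(1)[of Num.One] by simp
  then show ?thesis using emeasure_ball[OF assms, of c] by simp
qed

lemma log_pointwise:
  fixes c y :: "real^2" assumes r: "r > 0"
  shows "ennreal (indicator (cball c r) y * ln (r / dist y c))
     \<le> (\<Sum>k. ennreal (ln 2 * indicator (cball c (r / 2^k)) y))"
proof (cases "y \<in> cball c r \<and> y \<noteq> c")
  case False
  then show ?thesis by (auto simp: indicator_def)
next
  case True
  define d where "d = dist y c"
  have d: "0 < d" "d \<le> r" using True by (auto simp: d_def dist_commute)
  define t where "t = r / d"
  have t1: "t \<ge> 1" using d by (simp add: t_def)
  define m where "m = nat \<lfloor>log 2 t\<rfloor>"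
  have lg0: "log 2 t \<ge> 0" using t1 by simp
  have "real m \<le> log 2 t" using lg0 by (simp add: m_def)
  then have "2 powr real m \<le> 2 powr log 2 t" by simp
  then have m1: "2^m \<le> t" using t1 by (simp add: powr_realpow)
  have "log 2 t < real m + 1" using lg0 by (simp add: m_def)
  then have "ln t < (real m + 1) * ln 2" using t1 by (simp add: log_def field_simps)
  then have lnle: "ln (r / dist y c) \<le> real (Suc m) * ln 2" by (simp add: t_def d_def add.commute)
  have mem: "y \<in> cball c (r / 2^k)" if "k < Suc m" for k
  proof -
    have "(2::real)^k \<le> 2^m" using that by (intro power_increasing) auto
    with m1 have "2^k \<le> r / d" unfolding t_def by linarith
    then have "d \<le> r / 2^k" using d by (simp add: field_simps)
    then show ?thesis by (simp add: d_def dist_commute)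
  qed
  have "ennreal (indicator (cball c r) y * ln (r / dist y c)) \<le> ennreal (real (Suc m) * ln 2)"
    using True lnle by (intro ennreal_leI) auto
  also have "\<dots> = (\<Sum>k<Suc m. ennreal (ln 2 * indicator (cball c (r / 2^k)) y))"
    using mem by (simp add: ennreal_of_nat_eq_real_of_nat ennreal_mult' indicator_def)
  also have "\<dots> \<le> (\<Sum>k. ennreal (ln 2 * indicator (cball c (r / 2^k)) y))"
    by (rule sum_le_suminf) auto
  finally show ?thesis .
qed

lemma log_ball_nn:
  fixes c :: "real^2" assumes r: "r > 0"
  shows "(\<integral>\<^sup>+y. ennreal (indicator (cball c r) y * ln (r / dist y c)) \<partial>lborel) \<le> ennreal (2 * pi * r^2)"
proof -
  have sumv: "(\<Sum>k. ln 2 * pi * r^2 * (1/4::real)^k) = ln 2 * pi * r^2 * (4/3)"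
    by (subst suminf_mult) (auto intro: summable_geometric simp: suminf_geometric)
  have le: "ln 2 * pi * r^2 * (4/3) \<le> 2 * pi * r^2"
  proof -
    have "ln (2::real) \<le> 1" using ln_le_minus_one[of 2] by simp
    then have "ln 2 * (4/3) \<le> (2::real)" by simp
    then have "(ln 2 * (4/3)) * (pi * r^2) \<le> 2 * (pi * r^2)"
      by (intro mult_right_mono) auto
    then show ?thesis by (simp add: algebra_simps)
  qed
  have "(\<integral>\<^sup>+y. ennreal (indicator (cball c r) y * ln (r / dist y c)) \<partial>lborel)
      \<le> (\<integral>\<^sup>+y. (\<Sum>k. ennreal (ln 2 * indicator (cball c (r / 2^k)) y)) \<partial>lborel)"
    by (intro nn_integral_mono log_pointwise r)
  also have "\<dots> = (\<Sum>k. (\<integral>\<^sup>+y. ennreal (ln 2 * indicator (cball c (r / 2^k)) y) \<partial>lborel))"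
    by (intro nn_integral_suminf) (measurable, simp add: pred_def borel_closed)
  also have "\<dots> = (\<Sum>k. ennreal (ln 2 * pi * r^2 * (1/4)^k))"
  proof (intro suminf_cong)
    fix k :: nat
    have "(\<integral>\<^sup>+y. ennreal (ln 2 * indicator (cball c (r / 2^k)) y) \<partial>lborel)
        = (\<integral>\<^sup>+y. ennreal (ln 2) * indicator (cball c (r / 2^k)) y \<partial>lborel)"
      by (intro nn_integral_cong) (auto simp: indicator_def)
    also have "\<dots> = ennreal (ln 2) * emeasure lborel (cball c (r / 2^k))"
      by (intro nn_integral_cmult_indicator) auto
    also have "\<dots> = ennreal (ln 2) * ennreal (pi * (r / 2^k)^2)"
      using r by (subst emeasure_cball2) auto
    also have "\<dots> = ennreal (ln 2 * pi * r^2 * (1/4)^k)"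
    proof -
      have "(2::real)^(k*2) = 4^k" by (simp add: mult.commute[of k] power_mult)
      then show ?thesis
        by (simp add: ennreal_mult'[symmetric] power_divide power_mult_distrib field_simps
          flip: power_mult)
    qed
    finally show "(\<integral>\<^sup>+y. ennreal (ln 2 * indicator (cball c (r / 2^k)) y) \<partial>lborel)
        = ennreal (ln 2 * pi * r^2 * (1/4)^k)" .
  qed
  also have "\<dots> = ennreal (\<Sum>k. ln 2 * pi * r^2 * (1/4)^k)"
  proof -
    have s: "summable (\<lambda>k. ln 2 * pi * r^2 * (1/4::real)^k)"
      by (intro summable_mult summable_geometric) auto
    show ?thesis
      by (rule suminf_ennreal[OF _ ennreal_suminf_neq_top[OF s]]) (simp_all add: mult_nonneg_nonneg)
  qed
  also have "\<dots> = ennreal (ln 2 * pi * r^2 * (4/3))"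
    by (simp only: sumv)
  also have "\<dots> \<le> ennreal (2 * pi * r^2)"
    using le by (rule ennreal_leI)
  finally show ?thesis .
qed




lemma green_zero: "green x 0 = 0"
  by (simp add: green_def green_h_def)

lemma P_eq: fixes x y :: "real^2" assumes "y \<noteq> 0"
  shows "norm y * norm (x - y /\<^sub>R (norm y)^2) = norm (norm y *\<^sub>R x - y /\<^sub>R norm y)"
proof -
  have "norm y * norm (x - y /\<^sub>R (norm y)^2) = norm (norm y *\<^sub>R (x - y /\<^sub>R (norm y)^2))"
    by simp
  also have "norm y *\<^sub>R (x - y /\<^sub>R (norm y)^2) = norm y *\<^sub>R x - y /\<^sub>R norm y"
    using assms by (simp add: algebra_simps power2_eq_square)
  finally show ?thesis .
qed

lemma P_upper: fixes x y :: "real^2" assumes "norm x < 1" "norm y < 1"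
  shows "norm (norm y *\<^sub>R x - y /\<^sub>R norm y) \<le> 2"
proof -
  have "norm (norm y *\<^sub>R x - y /\<^sub>R norm y) \<le> norm (norm y *\<^sub>R x) + norm (y /\<^sub>R norm y)"
    by (rule norm_triangle_ineq4)
  also have "norm (norm y *\<^sub>R x) = norm y * norm x" by simp
  also have "\<dots> \<le> 1" using assms by (metis less_eq_real_def mult_le_one norm_ge_zero)
  also have "norm (y /\<^sub>R norm y) \<le> 1" by (cases "y = 0") auto
  finally show ?thesis by simp
qed

lemma P_lower: fixes x y :: "real^2" assumes "y \<noteq> 0"
  shows "1 - norm x * norm y \<le> norm (norm y *\<^sub>R x - y /\<^sub>R norm y)"
proof -
  have "norm (y /\<^sub>R norm y) - norm (norm y *\<^sub>R x) \<le> norm (norm y *\<^sub>R x - y /\<^sub>R norm y)"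
    by (metis norm_minus_commute norm_triangle_ineq2)
  moreover have "norm (y /\<^sub>R norm y) = 1" using assms by simp
  moreover have "norm (norm y *\<^sub>R x) = norm x * norm y" by simp
  ultimately show ?thesis by (simp add: mult.commute)
qed

lemma green_formula: fixes x y :: "real^2" assumes "y \<noteq> 0" "norm x * norm y < 1"
  shows "green x y = (1/(2*pi)) * (- ln (norm (x - y)) + ln (norm (norm y *\<^sub>R x - y /\<^sub>R norm y)))"
proof -
  have pos: "0 < norm (norm y *\<^sub>R x - y /\<^sub>R norm y)"
    using P_lower[OF assms(1), of x] assms(2) by linarith
  then have "x - y /\<^sub>R (norm y)^2 \<noteq> 0" using P_eq[OF assms(1), of x] by auto
  then have "ln (norm y) + ln (norm (x - y /\<^sub>R (norm y)^2)) = ln (norm (norm y *\<^sub>R x - y /\<^sub>R norm y))"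
    using assms(1) ln_mult[of "norm y" "norm (x - y /\<^sub>R (norm y)^2)"] P_eq[OF assms(1), of x] by simp
  then show ?thesis unfolding green_def green_h_def by (simp add: algebra_simps add_divide_distrib[symmetric])
qed

lemma phi_nonneg: "0 \<le> indicator (cball x r) y * ln (r / dist y x)" if "r > 0" for x y :: "real^2"
  using that by (cases "y = x") (auto simp: indicator_def dist_commute)

lemma neg_ln_le: fixes x y :: "real^2" assumes "0 < r" "r \<le> 1"
  shows "- ln (norm (x - y)) \<le> indicator (cball x r) y * ln (r / dist y x) - ln r"
proof -
  define d where "d = norm (x - y)"
  have dd: "dist y x = d" by (simp add: d_def dist_norm norm_minus_commute)
  have "ln r \<le> 0" using assms by simp
  show ?thesis
  proof (cases "d = 0")
    case True then show ?thesis using \<open>ln r \<le> 0\<close> phi_nonneg[OF assms(1), of x y] by (simp add: d_def)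
  next
    case False
    then have d0: "d > 0" by (simp add: d_def)
    show ?thesis
    proof (cases "d \<le> r")
      case True
      then have "y \<in> cball x r" using dd by (simp add: mem_cball dist_commute)
      then show ?thesis using d0 assms by (simp add: dd ln_div d_def)
    next
      case False
      then have "y \<notin> cball x r" using dd by (simp add: mem_cball dist_commute)
      moreover have "ln r \<le> ln d" using False assms by simp
      ultimately show ?thesis by (simp add: d_def)
    qed
  qed
qed

lemma green_upper: fixes x y :: "real^2"
  assumes "x \<in> ball 0 1" "y \<in> ball 0 1" "0 < r" "r \<le> 1"
  shows "green x y \<le> (1/(2*pi)) * (indicator (cball x r) y * ln (r / dist y x) - ln r + ln 2)"
proof (cases "y = 0")
  case True
  have "0 \<le> - ln r + ln 2" using assms by simp
  then show ?thesis using True green_zero phi_nonneg[OF assms(3), of x y] by simp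
next
  case False
  have nx: "norm x < 1" "norm y < 1" using assms by auto
  have "norm x * norm y < 1 * 1" by (rule mult_strict_mono) (use nx in auto)
  then have "norm x * norm y < 1" by simp
  then have g: "green x y = (1/(2*pi)) * (- ln (norm (x - y)) + ln (norm (norm y *\<^sub>R x - y /\<^sub>R norm y)))"
    by (rule green_formula[OF False])
  have pos: "0 < norm (norm y *\<^sub>R x - y /\<^sub>R norm y)"
    using P_lower[OF False, of x] \<open>norm x * norm y < 1\<close> by linarith
  have "ln (norm (norm y *\<^sub>R x - y /\<^sub>R norm y)) \<le> ln 2"
    using P_upper[OF nx] pos by simp
  then show ?thesis unfolding g using neg_ln_le[OF assms(3,4), of x y]
    by (intro mult_left_mono) auto
qed

lemma green_lower: fixes x y :: "real^2"
  assumes "x \<in> ball 0 r" "y \<in> ball 0 r" "0 < r" "r^2 \<le> 1/2" "y \<noteq> 0" "y \<noteq> x"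
  shows "(1/(2*pi)) * (- ln r - 2 * ln 2) \<le> green x y"
proof -
  have nx: "norm x < r" "norm y < r" using assms by auto
  have "norm x * norm y \<le> r * r" using nx assms(3) by (intro mult_mono) auto
  then have xy: "norm x * norm y \<le> 1/2" using assms(4) by (simp add: power2_eq_square)
  then have g: "green x y = (1/(2*pi)) * (- ln (norm (x - y)) + ln (norm (norm y *\<^sub>R x - y /\<^sub>R norm y)))"
    by (intro green_formula[OF assms(5)]) auto
  have "1/2 \<le> norm (norm y *\<^sub>R x - y /\<^sub>R norm y)"
    using P_lower[OF assms(5), of x] xy by linarith
  then have l1: "- ln 2 \<le> ln (norm (norm y *\<^sub>R x - y /\<^sub>R norm y))"
  proof -
    have "ln (1/2) \<le> ln (norm (norm y *\<^sub>R x - y /\<^sub>R norm y))"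
      using \<open>1/2 \<le> norm (norm y *\<^sub>R x - y /\<^sub>R norm y)\<close> by (subst ln_le_cancel_iff) auto
    then show ?thesis by (simp add: ln_div)
  qed
  have "norm (x - y) \<le> norm x + norm y" by (rule norm_triangle_ineq4)
  then have "norm (x - y) \<le> 2 * r" using nx by simp
  moreover have "0 < norm (x - y)" using assms(6) by simp
  ultimately have "ln (norm (x - y)) \<le> ln (2 * r)" using assms(3) by (subst ln_le_cancel_iff) auto
  then have "ln (norm (x - y)) \<le> ln 2 + ln r" using assms(3) by (simp add: ln_mult)
  then show ?thesis unfolding g using l1 by (intro mult_left_mono) auto
qed

lemma green_abs: fixes x y :: "real^2"
  assumes "x \<in> ball 0 r" "y \<in> ball 0 r" "0 < r" "r^2 \<le> 1/2"
  shows "\<bar>green x y\<bar> \<le> (1/(2*pi)) * (indicator (cball x (2*r)) y * ln (2*r / dist y x) + \<bar>ln (2*r)\<bar> + ln 2)"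
    (is "_ \<le> ?R")
proof -
  have phi: "0 \<le> indicator (cball x (2*r)) y * ln (2*r / dist y x)" using phi_nonneg assms(3) by simp
  have nx: "norm x < r" "norm y < r" using assms by auto
  have "norm (x - y) \<le> norm x + norm y" by (rule norm_triangle_ineq4)
  then have d2: "norm (x - y) \<le> 2 * r" using nx by simp
  have lnd: "\<bar>ln (norm (x - y))\<bar> \<le> indicator (cball x (2*r)) y * ln (2*r / dist y x) + \<bar>ln (2*r)\<bar>"
  proof (cases "x = y")
    case True then show ?thesis using phi by simp
  next
    case False
    then have d0: "0 < norm (x - y)" by simp
    have mem: "y \<in> cball x (2*r)" using d2 by (simp add: dist_norm)
    have e: "ln (2*r / dist y x) = ln (2*r) - ln (norm (x - y))"
      using d0 assms(3) by (simp add: ln_div dist_norm norm_minus_commute)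
    have "ln (norm (x - y)) \<le> ln (2*r)" using d0 d2 assms(3) by (subst ln_le_cancel_iff) auto
    then show ?thesis using mem e by (simp add: abs_if)
  qed
  show ?thesis
  proof (cases "y = 0")
    case True
    then show ?thesis using phi green_zero[of x] by simp
  next
    case False
    have "norm x * norm y \<le> r * r" using nx assms(3) by (intro mult_mono) auto
    then have xy: "norm x * norm y \<le> 1/2" using assms(4) by (simp add: power2_eq_square)
    then have g: "green x y = (1/(2*pi)) * (- ln (norm (x - y)) + ln (norm (norm y *\<^sub>R x - y /\<^sub>R norm y)))"
      by (intro green_formula[OF False]) auto
    have "1/2 \<le> norm (norm y *\<^sub>R x - y /\<^sub>R norm y)"
      using P_lower[OF False, of x] xy by linarith
    then have l1: "- ln 2 \<le> ln (norm (norm y *\<^sub>R x - y /\<^sub>R norm y))"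
    proof -
    have "ln (1/2) \<le> ln (norm (norm y *\<^sub>R x - y /\<^sub>R norm y))"
      using \<open>1/2 \<le> norm (norm y *\<^sub>R x - y /\<^sub>R norm y)\<close> by (subst ln_le_cancel_iff) auto
    then show ?thesis by (simp add: ln_div)
  qed
    have r1: "r < 1"
    proof (rule ccontr)
      assume "\<not> r < 1"
      then have "1 \<le> r^2" by (simp add: one_le_power)
      then show False using assms(4) by simp
    qed
    have "ln (norm (norm y *\<^sub>R x - y /\<^sub>R norm y)) \<le> ln 2"
      using P_upper[of x y] nx r1 \<open>1/2 \<le> norm (norm y *\<^sub>R x - y /\<^sub>R norm y)\<close> by (subst ln_le_cancel_iff) auto
    then have lP: "\<bar>ln (norm (norm y *\<^sub>R x - y /\<^sub>R norm y))\<bar> \<le> ln 2" using l1 by simp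
    have "\<bar>green x y\<bar> = (1/(2*pi)) * \<bar>- ln (norm (x - y)) + ln (norm (norm y *\<^sub>R x - y /\<^sub>R norm y))\<bar>"
      unfolding g by (simp add: abs_mult)
    also have "\<dots> \<le> (1/(2*pi)) * (\<bar>ln (norm (x - y))\<bar> + \<bar>ln (norm (norm y *\<^sub>R x - y /\<^sub>R norm y))\<bar>)"
      by (intro mult_left_mono) auto
    also have "\<dots> \<le> ?R"
      using lnd lP by (intro mult_left_mono) auto
    finally show ?thesis .
  qed
qed




lemma integral_le_nn:
  fixes f g :: "'a \<Rightarrow> real"
  assumes f: "f \<in> borel_measurable M" and fg: "AE x in M. f x \<le> g x"
    and g: "(\<integral>\<^sup>+x. ennreal (g x) \<partial>M) \<le> ennreal B" and B: "0 \<le> B"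
  shows "integral\<^sup>L M f \<le> B"
proof (cases "integrable M f")
  case False
  then show ?thesis using B by (simp add: not_integrable_integral_eq)
next
  case True
  have "integral\<^sup>L M f \<le> integral\<^sup>L M (\<lambda>x. max (f x) 0)"
    using True by (intro integral_mono) auto
  also have "\<dots> = enn2real (\<integral>\<^sup>+x. ennreal (max (f x) 0) \<partial>M)"
    using f by (intro integral_eq_nn_integral) auto
  also have "(\<integral>\<^sup>+x. ennreal (max (f x) 0) \<partial>M) \<le> (\<integral>\<^sup>+x. ennreal (g x) \<partial>M)"
  proof (rule nn_integral_mono_AE)
    show "AE x in M. ennreal (max (f x) 0) \<le> ennreal (g x)"
      using fg
    proof (rule eventually_mono)
      fix x assume "f x \<le> g x"
      then show "ennreal (max (f x) 0) \<le> ennreal (g x)"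
        by (cases "f x \<le> 0") (simp_all add: max_def ennreal_leI)
    qed
  qed
  then have "(\<integral>\<^sup>+x. ennreal (max (f x) 0) \<partial>M) \<le> ennreal B" using g by simp
  then have "enn2real (\<integral>\<^sup>+x. ennreal (max (f x) 0) \<partial>M) \<le> B"
    using B enn2real_mono[of "\<integral>\<^sup>+x. ennreal (max (f x) 0) \<partial>M" "ennreal B"] by simp
  finally show ?thesis .
qed

lemma green_measurable[measurable]:
  "(\<lambda>p. green (fst p) (snd p)) \<in> borel_measurable (lborel \<Otimes>\<^sub>M lborel)"
  unfolding green_def green_h_def by measurable

lemma phi_meas[measurable]: "(\<lambda>x::real^2. indicator (cball c r) x * ln (r / dist x c)) \<in> borel_measurable lborel"
proof -
  have "(\<lambda>x::real^2. ln (r / norm (x - c))) \<in> borel_measurable lborel" by measurable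
  moreover have "(indicator (cball c r) :: real^2 \<Rightarrow> real) \<in> borel_measurable lborel"
    by (intro borel_measurable_indicator) (simp add: borel_closed)
  ultimately show ?thesis unfolding dist_norm by (rule borel_measurable_times[rotated])
qed

lemma nn_bound:
  fixes W :: "real^2 \<Rightarrow> real" and c :: "real^2"
  assumes W[measurable]: "W \<in> borel_measurable lborel"
    and Wb: "AE y in lborel. 0 \<le> W y \<and> W y \<le> lam"
    and Wi: "(\<integral>\<^sup>+y. ennreal (W y) \<partial>lborel) \<le> 1"
    and r: "r > 0" and L: "L \<ge> 0" and lam: "lam \<ge> 0"
  shows "(\<integral>\<^sup>+y. ennreal ((indicator (cball c r) y * ln (r / dist y c) + L) * W y) \<partial>lborel)
     \<le> ennreal (lam * (2 * pi * r^2) + L)"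
proof -
  define phi where "phi = (\<lambda>y. indicator (cball c r) y * ln (r / dist y c))"
  have phi0: "\<And>y. 0 \<le> phi y" using phi_nonneg[OF r] unfolding phi_def by blast
  have [measurable]: "phi \<in> borel_measurable lborel" unfolding phi_def by (rule phi_meas)
  have X1: "(\<integral>\<^sup>+y. ennreal (phi y * W y) \<partial>lborel) \<le> (\<integral>\<^sup>+y. ennreal lam * ennreal (phi y) \<partial>lborel)"
  proof (rule nn_integral_mono_AE)
    show "AE y in lborel. ennreal (phi y * W y) \<le> ennreal lam * ennreal (phi y)"
      using Wb
    proof (rule eventually_mono)
      fix y assume "0 \<le> W y \<and> W y \<le> lam"
      then have "W y * phi y \<le> lam * phi y" using phi0[of y] mult_right_mono[of "W y" lam "phi y"] by simp
      then have "phi y * W y \<le> lam * phi y" by (simp add: mult.commute)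
      then show "ennreal (phi y * W y) \<le> ennreal lam * ennreal (phi y)"
      proof -
        have "ennreal lam * ennreal (phi y) = ennreal (lam * phi y)" using lam phi0[of y] by (simp add: ennreal_mult)
        then show ?thesis using ennreal_leI[OF \<open>phi y * W y \<le> lam * phi y\<close>] by simp
      qed
    qed
  qed
  also have "(\<integral>\<^sup>+y. ennreal lam * ennreal (phi y) \<partial>lborel) = ennreal lam * (\<integral>\<^sup>+y. ennreal (phi y) \<partial>lborel)"
    by (simp add: nn_integral_cmult)
  also have "\<dots> \<le> ennreal lam * ennreal (2 * pi * r^2)"
    unfolding phi_def by (intro mult_left_mono log_ball_nn r) simp
  finally have X: "(\<integral>\<^sup>+y. ennreal (phi y * W y) \<partial>lborel) \<le> ennreal lam * ennreal (2 * pi * r^2)" .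
  have Y: "ennreal L * (\<integral>\<^sup>+y. ennreal (W y) \<partial>lborel) \<le> ennreal L * 1"
    by (intro mult_left_mono Wi) simp
  have "(\<integral>\<^sup>+y. ennreal ((phi y + L) * W y) \<partial>lborel)
      = (\<integral>\<^sup>+y. ennreal (phi y * W y) + ennreal L * ennreal (W y) \<partial>lborel)"
  proof (rule nn_integral_cong_AE)
    show "AE y in lborel. ennreal ((phi y + L) * W y) = ennreal (phi y * W y) + ennreal L * ennreal (W y)"
      using Wb
    proof (rule eventually_mono)
      fix y assume "0 \<le> W y \<and> W y \<le> lam"
      then have "0 \<le> phi y * W y" "0 \<le> L * W y" using phi0[of y] L by auto
      then show "ennreal ((phi y + L) * W y) = ennreal (phi y * W y) + ennreal L * ennreal (W y)"
        using L \<open>0 \<le> W y \<and> W y \<le> lam\<close>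
        by (simp add: distrib_right ennreal_plus ennreal_mult)
    qed
  qed
  also have "\<dots> = (\<integral>\<^sup>+y. ennreal (phi y * W y) \<partial>lborel) + ennreal L * (\<integral>\<^sup>+y. ennreal (W y) \<partial>lborel)"
    by (subst nn_integral_add) (simp_all add: nn_integral_cmult)
  also have "\<dots> \<le> ennreal lam * ennreal (2 * pi * r^2) + ennreal L * 1"
    by (rule add_mono[OF X Y])
  also have "ennreal lam * ennreal (2 * pi * r^2) + ennreal L * 1 = ennreal (lam * (2 * pi * r^2) + L)"
    using lam L by (simp add: ennreal_mult ennreal_plus)
  finally show ?thesis unfolding phi_def .
qed




lemma green_meas_raw[measurable (raw)]:
  assumes "f \<in> borel_measurable M" "g \<in> borel_measurable M"
  shows "(\<lambda>x. green (f x) (g x) :: real) \<in> borel_measurable M"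
  unfolding green_def green_h_def using assms by measurable

lemma eps_facts:
  assumes lam: "1/pi < lam" and e: "\<epsilon> = (pi*lam) powr (-1/2)"
  shows "0 < \<epsilon>" "\<epsilon>^2 = 1/(pi*lam)" "lam * (pi * \<epsilon>^2) = 1" "\<epsilon> < 1" "0 < lam"
proof -
  have pl: "1 < pi * lam" using lam pi_gt_zero by (simp add: field_simps)
  show l0: "0 < lam" using lam pi_gt_zero by (smt (verit) divide_pos_pos)
  show "0 < \<epsilon>" using pl e l0 by simp
  have "\<epsilon>^2 = (pi*lam) powr (-1/2) * (pi*lam) powr (-1/2)" by (simp add: e power2_eq_square)
  also have "\<dots> = (pi*lam) powr (-1)" using pl by (simp add: powr_add[symmetric])
  also have "\<dots> = 1/(pi*lam)" using pl by (simp add: powr_minus_divide)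
  finally show e2: "\<epsilon>^2 = 1/(pi*lam)" .
  then show "lam * (pi * \<epsilon>^2) = 1" using pl l0 by simp
  have "\<epsilon>^2 < 1" using e2 pl by simp
  then show "\<epsilon> < 1" using \<open>0 < \<epsilon>\<close> by (smt (verit) one_le_power)
qed

lemma K_facts:
  assumes "w \<in> K_lambda lam"
  defines "W \<equiv> (\<lambda>x. indicator unit_disk x * w x)"
  shows "W \<in> borel_measurable lborel" "AE y in lborel. 0 \<le> W y \<and> W y \<le> lam \<or> lam < 0"
    "AE y in lborel. y \<in> unit_disk \<longrightarrow> 0 \<le> w y \<and> w y \<le> lam"
    "integrable lborel W" "integral\<^sup>L lborel W = 1"
proof -
  have m: "set_borel_measurable lborel unit_disk w"
    and ae: "AE x in lborel. x \<in> unit_disk \<longrightarrow> 0 \<le> w x \<and> w x \<le> lam"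
    and i: "set_integrable lborel unit_disk w"
    and one: "(LINT x:unit_disk|lborel. w x) = 1"
    using assms(1) by (auto simp: K_lambda_def)
  show "W \<in> borel_measurable lborel" using m by (simp add: W_def set_borel_measurable_def)
  show "AE x in lborel. x \<in> unit_disk \<longrightarrow> 0 \<le> w x \<and> w x \<le> lam" by (rule ae)
  show "AE y in lborel. 0 \<le> W y \<and> W y \<le> lam \<or> lam < 0"
    using ae by (rule eventually_mono) (auto simp: W_def indicator_def)
  show "integrable lborel W" using i by (simp add: W_def set_integrable_def)
  show "integral\<^sup>L lborel W = 1" using one by (simp add: W_def set_lebesgue_integral_def)
qed




lemma energy_upper:
  fixes w :: "real^2 \<Rightarrow> real"
  assumes lam: "1/pi < lam" and wK: "w \<in> K_lambda lam" and Om: "0 \<le> \<Omega>"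
    and e: "\<epsilon> = (pi*lam) powr (-1/2)"
  shows "energy \<Omega> w \<le> - (1/(4*pi)) * ln \<epsilon> + (2 + ln 2)/(4*pi) + \<Omega>/2"
proof -
  note ef = eps_facts[OF lam e]
  define W where "W = (\<lambda>x. indicator unit_disk x * w x)"
  note kf = K_facts[OF wK, folded W_def]
  have Wm[measurable]: "W \<in> borel_measurable lborel" by (rule kf(1))
  have Wb: "AE y in lborel. 0 \<le> W y \<and> W y \<le> lam"
    using kf(2) by (rule eventually_mono) (use ef(5) in \<open>auto simp: W_def\<close>)
  have Wn: "(\<integral>\<^sup>+y. ennreal (W y) \<partial>lborel) = 1"
  proof -
    have "AE y in lborel. 0 \<le> W y" using Wb by (rule eventually_mono) auto
    then show ?thesis using nn_integral_eq_integral[OF kf(4)] kf(5) unfolding W_def by simp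
  qed
  define L where "L = - ln \<epsilon> + ln 2"
  have L0: "0 \<le> L" using ef by (simp add: L_def)
  define B0 where "B0 = (1/(2*pi)) * (2 + L)"
  have B00: "0 \<le> B0" using L0 by (simp add: B0_def)
  define phi where "phi = (\<lambda>(x::real^2) (y::real^2). indicator (cball x \<epsilon>) y * ln (\<epsilon> / dist y x))"
  have nnb: "(\<integral>\<^sup>+y. ennreal ((phi x y + L) * W y) \<partial>lborel) \<le> ennreal (2 + L)" for x
  proof -
    have "(\<integral>\<^sup>+y. ennreal ((phi x y + L) * W y) \<partial>lborel) \<le> ennreal (lam * (2 * pi * \<epsilon>^2) + L)"
      unfolding phi_def using Wn ef L0 by (intro nn_bound[OF Wm Wb]) auto
    also have "lam * (2 * pi * \<epsilon>^2) = 2" using ef(3) by (simp add: algebra_simps)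
    finally show ?thesis .
  qed
  have inner: "(\<integral>y. green x y * W x * W y \<partial>lborel) \<le> W x * B0"
    if x: "x \<in> unit_disk \<longrightarrow> 0 \<le> w x \<and> w x \<le> lam" for x
  proof (cases "x \<in> unit_disk")
    case False
    then show ?thesis by (simp add: W_def)
  next
    case True
    with x have wx: "0 \<le> W x" by (simp add: W_def)
    show ?thesis
    proof (rule integral_le_nn)
      show "(\<lambda>y. green x y * W x * W y) \<in> borel_measurable lborel" by measurable
      show "AE y in lborel. green x y * W x * W y \<le> (W x / (2*pi)) * ((phi x y + L) * W y)"
        using Wb
      proof (rule eventually_mono)
        fix y assume Wy: "0 \<le> W y \<and> W y \<le> lam"
        show "green x y * W x * W y \<le> (W x / (2*pi)) * ((phi x y + L) * W y)"
        proof (cases "y \<in> unit_disk")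
          case False then show ?thesis by (simp add: W_def)
        next
          case yD: True
          have g: "green x y \<le> (1/(2*pi)) * (phi x y + L)"
            using green_upper[of x y \<epsilon>] True yD ef unfolding phi_def L_def unit_disk_def
            by (simp add: algebra_simps)
          have "green x y * (W x * W y) \<le> (1/(2*pi)) * (phi x y + L) * (W x * W y)"
            using Wy wx by (intro mult_right_mono g) auto
          then show ?thesis by (simp add: algebra_simps add_divide_distrib)
        qed
      qed
      have "(\<integral>\<^sup>+y. ennreal ((W x / (2*pi)) * ((phi x y + L) * W y)) \<partial>lborel)
          = (\<integral>\<^sup>+y. ennreal (W x / (2*pi)) * ennreal ((phi x y + L) * W y) \<partial>lborel)"
        using wx by (intro nn_integral_cong) (rule ennreal_mult', simp)
      also have "\<dots> = ennreal (W x / (2*pi)) * (\<integral>\<^sup>+y. ennreal ((phi x y + L) * W y) \<partial>lborel)"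
        unfolding phi_def by (rule nn_integral_cmult) measurable
      also have "\<dots> \<le> ennreal (W x / (2*pi)) * ennreal (2 + L)"
        by (intro mult_left_mono nnb) auto
      also have "\<dots> = ennreal (W x * B0)"
        using wx by (simp add: ennreal_mult'[symmetric] B0_def)
      finally show "(\<integral>\<^sup>+y. ennreal ((W x / (2*pi)) * ((phi x y + L) * W y)) \<partial>lborel) \<le> ennreal (W x * B0)" .
      show "0 \<le> W x * B0" using wx B00 by simp
    qed
  qed
  have I1: "(LINT x:unit_disk|lborel. (LINT y:unit_disk|lborel. green x y * w x * w y)) \<le> B0"
  proof -
    have eq: "(LINT x:unit_disk|lborel. (LINT y:unit_disk|lborel. green x y * w x * w y))
        = (\<integral>x. (\<integral>y. green x y * W x * W y \<partial>lborel) \<partial>lborel)"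
      unfolding set_lebesgue_integral_def
    proof (rule Bochner_Integration.integral_cong[OF refl])
      fix x
      show "indicator unit_disk x *\<^sub>R (\<integral>y. indicator unit_disk y *\<^sub>R (green x y * w x * w y) \<partial>lborel)
          = (\<integral>y. green x y * W x * W y \<partial>lborel)"
      proof (cases "x \<in> unit_disk")
        case True
        then show ?thesis by (simp, intro Bochner_Integration.integral_cong refl) (simp add: W_def indicator_def)
      qed (simp add: W_def)
    qed
    have "(\<integral>x. (\<integral>y. green x y * W x * W y \<partial>lborel) \<partial>lborel) \<le> B0"
    proof (rule integral_le_nn)
      show "(\<lambda>x. \<integral>y. green x y * W x * W y \<partial>lborel) \<in> borel_measurable lborel" by measurable
      show "AE x in lborel. (\<integral>y. green x y * W x * W y \<partial>lborel) \<le> B0 * W x"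
        using kf(3) by (rule eventually_mono) (use inner in \<open>auto simp: mult.commute\<close>)
      have "(\<integral>\<^sup>+x. ennreal (B0 * W x) \<partial>lborel) = ennreal B0 * (\<integral>\<^sup>+x. ennreal (W x) \<partial>lborel)"
        using B00 by (simp add: ennreal_mult' nn_integral_cmult)
      then show "(\<integral>\<^sup>+x. ennreal (B0 * W x) \<partial>lborel) \<le> ennreal B0" using Wn by simp
    qed (rule B00)
    then show ?thesis using eq by simp
  qed
  have I2: "(LINT x:unit_disk|lborel. (norm x)^2 * w x) \<le> 1"
  proof -
    have eq: "(LINT x:unit_disk|lborel. (norm x)^2 * w x) = (\<integral>x. (norm x)^2 * W x \<partial>lborel)"
      unfolding set_lebesgue_integral_def
      by (rule Bochner_Integration.integral_cong[OF refl]) (simp add: W_def indicator_def)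
    have "(\<integral>x. (norm x)^2 * W x \<partial>lborel) \<le> 1"
    proof (rule integral_le_nn)
      show "(\<lambda>x. (norm x)^2 * W x) \<in> borel_measurable lborel" by measurable
      show "AE x in lborel. (norm x)^2 * W x \<le> W x"
        using Wb
      proof (rule eventually_mono)
        fix x assume Wx: "0 \<le> W x \<and> W x \<le> lam"
        show "(norm x)^2 * W x \<le> W x"
        proof (cases "x \<in> unit_disk")
          case True
          then have "(norm x)^2 \<le> 1" by (simp add: unit_disk_def abs_square_le_1)
          then show ?thesis using Wx mult_right_mono[of "(norm x)^2" 1 "W x"] by simp
        qed (simp add: W_def)
      qed
      show "(\<integral>\<^sup>+x. ennreal (W x) \<partial>lborel) \<le> ennreal 1" using Wn by simp
    qed simp
    then show ?thesis using eq by simp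
  qed
  have "energy \<Omega> w \<le> (1/2) * B0 + (\<Omega>/2) * 1"
    unfolding energy_def using I1 I2 Om by (intro add_mono mult_left_mono) auto
  also have "\<dots> = - (1/(4*pi)) * ln \<epsilon> + (2 + ln 2)/(4*pi) + \<Omega>/2"
    by (simp add: B0_def L_def field_simps)
  finally show ?thesis .
qed




lemma ball_sets[measurable]: "ball (c::real^2) r \<in> sets lborel" by simp
lemma disk_sets[measurable]: "unit_disk \<in> sets lborel" unfolding unit_disk_def by simp

lemma energy_lower:
  assumes lam: "2/pi \<le> lam" and e: "\<epsilon> = (pi*lam) powr (-1/2)" and Om: "0 \<le> \<Omega>"
  defines "v \<equiv> (\<lambda>x::real^2. lam * indicator (ball 0 \<epsilon>) x)"
  shows "v \<in> K_lambda lam" "- (1/(4*pi)) * ln \<epsilon> - ln 2 / (2*pi) \<le> energy \<Omega> v"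
proof -
  have lam1: "1/pi < lam" using lam pi_gt_zero by (smt (verit) divide_strict_right_mono)
  note ef = eps_facts[OF lam1 e]
  have e2: "\<epsilon>^2 \<le> 1/2"
  proof -
    have "pi * (2/pi) \<le> pi * lam" using lam by (intro mult_left_mono) auto
    then have "2 \<le> pi * lam" by simp
    then show ?thesis using ef(2) by (simp add: field_simps)
  qed
  have vm[measurable]: "v \<in> borel_measurable lborel" unfolding v_def by measurable
  have sub: "ball 0 \<epsilon> \<subseteq> unit_disk" using ef(4) by (auto simp: unit_disk_def)
  have vD: "indicator unit_disk x * v x = v x" for x
    using sub by (auto simp: v_def indicator_def)
  have v0: "0 \<le> v x" "v x \<le> lam" for x using ef(5) by (auto simp: v_def indicator_def)
  have vout: "v x = 0" if "x \<notin> ball 0 \<epsilon>" for x using that by (simp add: v_def)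
  have vin: "v x = lam" if "x \<in> ball 0 \<epsilon>" for x using that by (simp add: v_def)
  have vint: "integrable lborel v"
    unfolding v_def using emeasure_ball2[of \<epsilon> 0] ef(1) by (intro integrable_mult_right integrable_real_indicator) auto
  have vone: "integral\<^sup>L lborel v = 1"
  proof -
    have "measure lborel (ball (0::real^2) \<epsilon>) = pi * \<epsilon>^2"
      using emeasure_ball2[of \<epsilon> 0] ef(1) by (simp add: measure_def)
    then show ?thesis using ef(3) by (simp add: v_def)
  qed
  show vK: "v \<in> K_lambda lam"
    unfolding K_lambda_def set_borel_measurable_def set_integrable_def set_lebesgue_integral_def
    using vint vone v0 by (simp add: vD)
  have vn: "(\<integral>\<^sup>+y. ennreal (v y) \<partial>lborel) = 1"
    using nn_integral_eq_integral[OF vint] vone v0 by simp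
  have vb: "AE y in lborel. 0 \<le> v y \<and> v y \<le> lam" using v0 by simp
  define K where "K = \<bar>ln (2*\<epsilon>)\<bar> + ln 2"
  have K0: "0 \<le> K" by (simp add: K_def)
  define Jb where "Jb = (1/(2*pi)) * (8 + K)"
  have Jb0: "0 \<le> Jb" using K0 by (simp add: Jb_def)
  define m where "m = (1/(2*pi)) * (- ln \<epsilon> - 2 * ln 2)"
  define phi where "phi = (\<lambda>(x::real^2) (y::real^2). indicator (cball x (2*\<epsilon>)) y * ln (2*\<epsilon> / dist y x))"
  have phim[measurable]: "phi x \<in> borel_measurable lborel" for x unfolding phi_def by (rule phi_meas)
  have phi0: "0 \<le> phi x y" for x y unfolding phi_def using phi_nonneg ef(1) by simp
  have gbound: "\<bar>green x y * v y\<bar> \<le> (1/(2*pi)) * ((phi x y + K) * v y)" if x: "x \<in> ball 0 \<epsilon>" for x y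
  proof (cases "y \<in> ball 0 \<epsilon>")
    case True
    have "\<bar>green x y\<bar> \<le> (1/(2*pi)) * (phi x y + K)"
      using green_abs[OF x True ef(1) e2] unfolding phi_def K_def by (simp add: algebra_simps)
    then have "\<bar>green x y\<bar> * v y \<le> (1/(2*pi)) * (phi x y + K) * v y"
      using v0[of y] by (intro mult_right_mono) auto
    then show ?thesis using v0[of y] by (simp add: abs_mult algebra_simps add_divide_distrib)
  qed (simp add: vout)
  have nnJ: "(\<integral>\<^sup>+y. ennreal ((1/(2*pi)) * ((phi x y + K) * v y)) \<partial>lborel) \<le> ennreal Jb" for x
  proof -
    have "(\<integral>\<^sup>+y. ennreal ((1/(2*pi)) * ((phi x y + K) * v y)) \<partial>lborel)
        = (\<integral>\<^sup>+y. ennreal (1/(2*pi)) * ennreal ((phi x y + K) * v y) \<partial>lborel)"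
      by (intro nn_integral_cong) (rule ennreal_mult', simp)
    also have "\<dots> = ennreal (1/(2*pi)) * (\<integral>\<^sup>+y. ennreal ((phi x y + K) * v y) \<partial>lborel)"
      by (rule nn_integral_cmult) measurable
    also have "(\<integral>\<^sup>+y. ennreal ((phi x y + K) * v y) \<partial>lborel) \<le> ennreal (lam * (2 * pi * (2*\<epsilon>)^2) + K)"
      unfolding phi_def using vn ef K0 by (intro nn_bound[OF vm vb]) auto
    also have "lam * (2 * pi * (2*\<epsilon>)^2) = 8" using ef(3) by (simp add: algebra_simps power_mult_distrib)
    finally have "(\<integral>\<^sup>+y. ennreal ((1/(2*pi)) * ((phi x y + K) * v y)) \<partial>lborel)
        \<le> ennreal (1/(2*pi)) * ennreal (8 + K)" by (simp add: mult_left_mono)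
    also have "\<dots> = ennreal Jb" unfolding Jb_def by (simp add: ennreal_mult'[symmetric])
    finally show ?thesis .
  qed
  have gint: "integrable lborel (\<lambda>y. (1/(2*pi)) * ((phi x y + K) * v y))" for x
  proof (rule integrableI_nonneg)
    show "(\<lambda>y. (1/(2*pi)) * ((phi x y + K) * v y)) \<in> borel_measurable lborel" by measurable
    show "AE y in lborel. 0 \<le> (1/(2*pi)) * ((phi x y + K) * v y)"
      using phi0 K0 v0 by simp
    show "(\<integral>\<^sup>+y. ennreal ((1/(2*pi)) * ((phi x y + K) * v y)) \<partial>lborel) < \<infinity>"
      using nnJ[of x] by (simp add: le_less_trans)
  qed
  have Jint: "integrable lborel (\<lambda>y. green x y * v y)" if x: "x \<in> ball 0 \<epsilon>" for x
  proof (rule Bochner_Integration.integrable_bound[OF gint[of x]])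
    show "(\<lambda>y. green x y * v y) \<in> borel_measurable lborel" by measurable
    show "AE y in lborel. norm (green x y * v y) \<le> norm ((1/(2*pi)) * ((phi x y + K) * v y))"
    proof (rule AE_I2)
      fix y
      have "0 \<le> (phi x y + K) * v y" using phi0[of x y] K0 v0[of y] by simp
      then show "norm (green x y * v y) \<le> norm ((1/(2*pi)) * ((phi x y + K) * v y))"
        using gbound[OF x, of y] by simp
    qed
  qed
  have Jabs: "\<bar>\<integral>y. green x y * v y \<partial>lborel\<bar> \<le> Jb" if x: "x \<in> ball 0 \<epsilon>" for x
  proof -
    have "\<bar>\<integral>y. green x y * v y \<partial>lborel\<bar> \<le> (\<integral>y. \<bar>green x y * v y\<bar> \<partial>lborel)"
      using Bochner_Integration.integral_norm_bound[of lborel "\<lambda>y. green x y * v y"] by simp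
    also have "\<dots> \<le> Jb"
    proof (rule integral_le_nn)
      show "(\<lambda>y. \<bar>green x y * v y\<bar>) \<in> borel_measurable lborel" by measurable
      show "AE y in lborel. \<bar>green x y * v y\<bar> \<le> (1/(2*pi)) * ((phi x y + K) * v y)"
        using gbound[OF x] by simp
      show "(\<integral>\<^sup>+y. ennreal ((1/(2*pi)) * ((phi x y + K) * v y)) \<partial>lborel) \<le> ennreal Jb" by (rule nnJ)
      show "0 \<le> Jb" using K0 by (simp add: Jb_def)
    qed
    finally show ?thesis .
  qed
  have Jlow: "m \<le> (\<integral>y. green x y * v y \<partial>lborel)" if x: "x \<in> ball 0 \<epsilon>" for x
  proof -
    have "m = (\<integral>y. m * v y \<partial>lborel)" using vone by simp
    also have "\<dots> \<le> (\<integral>y. green x y * v y \<partial>lborel)"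
    proof (rule integral_mono_AE)
      show "integrable lborel (\<lambda>y. m * v y)" using vint by simp
      show "integrable lborel (\<lambda>y. green x y * v y)" by (rule Jint[OF x])
      show "AE y in lborel. m * v y \<le> green x y * v y"
        using AE_lborel_singleton[of x] AE_lborel_singleton[of 0]
      proof (eventually_elim)
        case (elim y)
        show ?case
        proof (cases "y \<in> ball 0 \<epsilon>")
          case True
          have "m \<le> green x y" using green_lower[OF x True ef(1) e2] elim unfolding m_def by simp
          then show ?thesis using v0[of y] by (intro mult_right_mono) auto
        qed (simp add: vout)
      qed
    qed
    finally show ?thesis .
  qed
  have eq: "(LINT x:unit_disk|lborel. (LINT y:unit_disk|lborel. green x y * v x * v y))
      = (\<integral>x. (\<integral>y. green x y * v x * v y \<partial>lborel) \<partial>lborel)"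
    unfolding set_lebesgue_integral_def
  proof (rule Bochner_Integration.integral_cong[OF refl])
    fix x
    show "indicator unit_disk x *\<^sub>R (\<integral>y. indicator unit_disk y *\<^sub>R (green x y * v x * v y) \<partial>lborel)
        = (\<integral>y. green x y * v x * v y \<partial>lborel)"
    proof (cases "x \<in> unit_disk")
      case True
      have "(\<integral>y. indicator unit_disk y *\<^sub>R (green x y * v x * v y) \<partial>lborel) = (\<integral>y. green x y * v x * v y \<partial>lborel)"
        by (intro Bochner_Integration.integral_cong refl) (metis vD mult.assoc mult.left_commute real_scaleR_def)
      then show ?thesis using True by simp
    next
      case False
      then have "v x = 0" using sub vout by blast
      then show ?thesis by simp
    qed
  qed
  have Feq: "(\<integral>y. green x y * v x * v y \<partial>lborel) = v x * (\<integral>y. green x y * v y \<partial>lborel)" for x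
  proof -
    have "(\<integral>y. green x y * v x * v y \<partial>lborel) = (\<integral>y. v x * (green x y * v y) \<partial>lborel)"
      by (simp add: algebra_simps)
    then show ?thesis by simp
  qed
  have Fm[measurable]: "(\<lambda>x. \<integral>y. green x y * v x * v y \<partial>lborel) \<in> borel_measurable lborel" by measurable
  have Flow: "m * v x \<le> (\<integral>y. green x y * v x * v y \<partial>lborel)" for x
  proof (cases "x \<in> ball 0 \<epsilon>")
    case True
    have "m * v x \<le> (\<integral>y. green x y * v y \<partial>lborel) * v x"
      by (rule mult_right_mono[OF Jlow[OF True] v0(1)])
    then show ?thesis unfolding Feq by (simp only: mult.commute)
  qed (simp add: vout Feq)
  have Fint: "integrable lborel (\<lambda>x. \<integral>y. green x y * v x * v y \<partial>lborel)"
  proof (rule Bochner_Integration.integrable_bound)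
    show "integrable lborel (\<lambda>x. Jb * v x)" using vint by simp
    show "AE x in lborel. norm (\<integral>y. green x y * v x * v y \<partial>lborel) \<le> norm (Jb * v x)"
    proof (rule AE_I2)
      fix x
      show "norm (\<integral>y. green x y * v x * v y \<partial>lborel) \<le> norm (Jb * v x)"
      proof (cases "x \<in> ball 0 \<epsilon>")
        case True
        have "\<bar>v x * (\<integral>y. green x y * v y \<partial>lborel)\<bar> \<le> v x * Jb"
          using Jabs[OF True] v0[of x] by (simp add: abs_mult mult_left_mono)
        then show ?thesis unfolding Feq using v0[of x] Jb0 by (simp add: abs_mult mult.commute)
      qed (simp add: vout Feq)
    qed
  qed measurable
  have I1: "m \<le> (LINT x:unit_disk|lborel. (LINT y:unit_disk|lborel. green x y * v x * v y))"
  proof -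
    have "m = (\<integral>x. m * v x \<partial>lborel)" using vone by simp
    also have "\<dots> \<le> (\<integral>x. (\<integral>y. green x y * v x * v y \<partial>lborel) \<partial>lborel)"
      using vint Fint Flow by (intro integral_mono) auto
    finally show ?thesis using eq by simp
  qed
  have I2: "0 \<le> (LINT x:unit_disk|lborel. (norm x)^2 * v x)"
    unfolding set_lebesgue_integral_def using v0 by (intro integral_nonneg_AE) (simp add: indicator_def)
  have "(1/2) * m + (\<Omega>/2) * 0 \<le> energy \<Omega> v"
    unfolding energy_def using I1 I2 Om by (intro add_mono mult_left_mono) auto
  moreover have "(1/2) * m + (\<Omega>/2) * 0 = - (1/(4*pi)) * ln \<epsilon> - ln 2 / (2*pi)"
    by (simp add: m_def field_simps)
  ultimately show "- (1/(4*pi)) * ln \<epsilon> - ln 2 / (2*pi) \<le> energy \<Omega> v" by simp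
qed




theorem lemma2p6:
  fixes \<Omega> :: real and w :: "real \<Rightarrow> real^2 \<Rightarrow> real"
  assumes "\<Omega> > 0"
    and "\<And>lam. lam > 1/pi \<Longrightarrow> w lam \<in> K_lambda lam"
    and "\<And>lam. lam > 1/pi \<Longrightarrow> \<forall>v\<in>K_lambda lam. energy \<Omega> v \<le> energy \<Omega> (w lam)"
  shows "\<exists>C \<Lambda>. \<forall>lam\<ge>\<Lambda>.
           \<bar>energy \<Omega> (w lam) - (- (1/(4*pi)) * ln ((pi*lam) powr (-1/2)))\<bar> \<le> C"
proof (intro exI allI impI)
  fix lam :: real
  assume lam: "2/pi \<le> lam"
  have lam1: "1/pi < lam" using lam pi_gt_zero by (smt (verit) divide_strict_right_mono)
  define \<epsilon> where "\<epsilon> = (pi*lam) powr (-1/2)"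
  define v where "v = (\<lambda>x::real^2. lam * indicator (ball 0 \<epsilon>) x)"
  have Om: "0 \<le> \<Omega>" using assms(1) by simp
  have up: "energy \<Omega> (w lam) \<le> - (1/(4*pi)) * ln \<epsilon> + (2 + ln 2)/(4*pi) + \<Omega>/2"
    by (rule energy_upper[OF lam1 assms(2)[OF lam1] Om \<epsilon>_def])
  have vK: "v \<in> K_lambda lam" and lowv: "- (1/(4*pi)) * ln \<epsilon> - ln 2 / (2*pi) \<le> energy \<Omega> v"
    using energy_lower[OF lam \<epsilon>_def Om] unfolding v_def by auto
  have "energy \<Omega> v \<le> energy \<Omega> (w lam)" using assms(3)[OF lam1] vK by blast
  have a: "0 \<le> ln 2 / (2*pi)" and b: "0 \<le> (2 + ln 2)/(4*pi)" by simp_all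
  with lowv up \<open>energy \<Omega> v \<le> energy \<Omega> (w lam)\<close> have "\<bar>energy \<Omega> (w lam) - (- (1/(4*pi)) * ln \<epsilon>)\<bar> \<le> ln 2 / (2*pi) + ((2 + ln 2)/(4*pi) + \<Omega>/2)"
    using Om unfolding abs_le_iff by linarith
  then show "\<bar>energy \<Omega> (w lam) - (- (1/(4*pi)) * ln ((pi*lam) powr (-1/2)))\<bar> \<le> ln 2 / (2*pi) + ((2 + ln 2)/(4*pi) + \<Omega>/2)"
    unfolding \<epsilon>_def .
qed


end
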